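(* Let $(B,\lfloor\cdot,\cdot\rfloor)$ be an SSD space with quadratic form $q$ and let $P\subset B$ be an affine $q$-positive set. Then $P$ is premaximally $q$-positive if and only if $P^{\pi}$ is an affine subset of $B$.
   Context: An SSD space is a pair $(B,\lfloor\cdot,\cdot\rfloor)$ with $B$ a nonzero real vector space and $\lfloor\cdot,\cdot\rfloor$ a symmetric bilinear form; $q(b)=\frac12\lfloor b,b\rfloor$. A nonempty $A\subset B$ is $q$-positive if $q(b-c)\ge0$ for all $b,c\in A$; maximally $q$-positive if $q$-positive and not properly contained in another $q$-positive set. $A^{\pi}:=\{b\in B: q(b-a)\ge0\ \forall a\in A\}$. $P$ is premaximally $q$-positive if there is a unique maximally $q$-positive set containing $P$. *)

theory Defs
  imports "HOL-Analysis.Analysis"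
begin

definition ssd_space :: "('a::real_vector \<Rightarrow> 'a \<Rightarrow> real) \<Rightarrow> bool" where
  "ssd_space bf \<longleftrightarrow> bilinear bf \<and> (\<forall>x y. bf x y = bf y x) \<and> (\<exists>b::'a. b \<noteq> 0)"

definition qform :: "('a::real_vector \<Rightarrow> 'a \<Rightarrow> real) \<Rightarrow> 'a \<Rightarrow> real" where
  "qform bf b = bf b b / 2"

definition q_positive :: "('a::real_vector \<Rightarrow> 'a \<Rightarrow> real) \<Rightarrow> 'a set \<Rightarrow> bool" where
  "q_positive bf A \<longleftrightarrow> A \<noteq> {} \<and> (\<forall>b\<in>A. \<forall>c\<in>A. qform bf (b - c) \<ge> 0)"

definition max_q_positive :: "('a::real_vector \<Rightarrow> 'a \<Rightarrow> real) \<Rightarrow> 'a set \<Rightarrow> bool" where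
  "max_q_positive bf A \<longleftrightarrow> q_positive bf A \<and> (\<forall>A'. q_positive bf A' \<and> A \<subseteq> A' \<longrightarrow> A' = A)"

definition pi_set :: "('a::real_vector \<Rightarrow> 'a \<Rightarrow> real) \<Rightarrow> 'a set \<Rightarrow> 'a set" where
  "pi_set bf A = {b. \<forall>a\<in>A. qform bf (b - a) \<ge> 0}"

definition premax_q_positive :: "('a::real_vector \<Rightarrow> 'a \<Rightarrow> real) \<Rightarrow> 'a set \<Rightarrow> bool" where
  "premax_q_positive bf P \<longleftrightarrow> (\<exists>!M. max_q_positive bf M \<and> P \<subseteq> M)"

end

theory Submission
  imports Defs
begin

lemma q_neg: "bilinear bf \<Longrightarrow> qform bf (- x) = qform bf x"
  by (simp add: qform_def bilinear_lneg bilinear_rneg)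

lemma q_scale: "bilinear bf \<Longrightarrow> qform bf (t *\<^sub>R x) = t^2 * qform bf x"
  by (simp add: qform_def bilinear_lmul bilinear_rmul power2_eq_square)

lemma q_zero: "bilinear bf \<Longrightarrow> qform bf 0 = 0"
  using q_scale[of bf 0 0] by simp

lemma q_swap: "bilinear bf \<Longrightarrow> qform bf (a - b) = qform bf (b - a)"
  using q_neg[of bf "b - a"] by simp

lemma exists_max:
  assumes "q_positive bf S"
  shows "\<exists>M. max_q_positive bf M \<and> S \<subseteq> M"
proof -
  let ?A = "{A. q_positive bf A \<and> S \<subseteq> A}"
  have "\<exists>M\<in>?A. \<forall>X\<in>?A. M \<subseteq> X \<longrightarrow> X = M"
  proof (rule subset_Zorn_nonempty)
    show "?A \<noteq> {}" using assms by blast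
  next
    fix C assume C: "C \<noteq> {}" "subset.chain ?A C"
    then have sub: "C \<subseteq> ?A" and tot: "\<forall>X\<in>C. \<forall>Y\<in>C. X \<subseteq> Y \<or> Y \<subseteq> X"
      by (auto simp: subset_chain_def)
    have "q_positive bf (\<Union>C)"
      unfolding q_positive_def
    proof (intro conjI ballI)
      obtain X where "X \<in> C" using C(1) by blast
      then have "S \<subseteq> X" using sub by blast
      then have "S \<subseteq> \<Union>C" using \<open>X \<in> C\<close> by blast
      moreover have "S \<noteq> {}" using assms unfolding q_positive_def by blast
      ultimately show "\<Union>C \<noteq> {}" by blast
    next
      fix b c assume "b \<in> \<Union>C" "c \<in> \<Union>C"
      then obtain X Y where XY: "X \<in> C" "Y \<in> C" "b \<in> X" "c \<in> Y" by blast
      from tot XY have "X \<subseteq> Y \<or> Y \<subseteq> X" by blast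
      then obtain Z where Z: "Z \<in> C" "b \<in> Z" "c \<in> Z" using XY by blast
      then have "q_positive bf Z" using sub by blast
      then show "qform bf (b - c) \<ge> 0"
        using Z unfolding q_positive_def by blast
    qed
    moreover have "S \<subseteq> \<Union>C"
    proof -
      obtain X where "X \<in> C" using C(1) by blast
      then show ?thesis using sub by blast
    qed
    ultimately show "\<Union>C \<in> ?A" by blast
  qed
  then obtain M where "M \<in> ?A" "\<forall>X\<in>?A. M \<subseteq> X \<longrightarrow> X = M" by blast
  then have M: "q_positive bf M" "S \<subseteq> M" "\<And>X. q_positive bf X \<Longrightarrow> S \<subseteq> X \<Longrightarrow> M \<subseteq> X \<Longrightarrow> X = M" by auto
  have "max_q_positive bf M" unfolding max_q_positive_def
  proof (intro conjI allI impI)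
    fix A' assume "q_positive bf A' \<and> M \<subseteq> A'"
    then show "A' = M" using M by blast
  qed (rule M(1))
  with M(2) show ?thesis by blast
qed

lemma pi_sub:
  assumes "q_positive bf M" "P \<subseteq> M"
  shows "M \<subseteq> pi_set bf P"
proof
  fix b assume "b \<in> M"
  then show "b \<in> pi_set bf P"
    using assms unfolding q_positive_def pi_set_def by blast
qed

lemma premax_iff:
  assumes bl: "bilinear bf" and P: "q_positive bf P"
  shows "premax_q_positive bf P \<longleftrightarrow> q_positive bf (pi_set bf P)"
proof
  assume pm: "premax_q_positive bf P"
  then obtain M where M: "max_q_positive bf M" "P \<subseteq> M"
    and uq: "\<And>M'. max_q_positive bf M' \<and> P \<subseteq> M' \<Longrightarrow> M' = M"
    unfolding premax_q_positive_def by blast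
  have "pi_set bf P \<subseteq> M"
  proof
    fix b assume b: "b \<in> pi_set bf P"
    have "q_positive bf (insert b P)"
      unfolding q_positive_def
    proof (intro conjI ballI)
      fix x y assume "x \<in> insert b P" "y \<in> insert b P"
      then consider "x = b" "y = b" | "x = b" "y \<in> P" | "x \<in> P" "y = b" | "x \<in> P" "y \<in> P" by blast
      then show "qform bf (x - y) \<ge> 0"
      proof cases
        case 1 then show ?thesis using q_zero[OF bl] by simp
      next
        case 2 then show ?thesis using b unfolding pi_set_def by blast
      next
        case 3 then show ?thesis using b q_swap[OF bl, of x y] unfolding pi_set_def by auto
      next
        case 4 then show ?thesis using P unfolding q_positive_def by blast
      qed
    qed simp
    then obtain M' where "max_q_positive bf M'" "insert b P \<subseteq> M'"
      using exists_max by blast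
    with uq have "M' = M" by blast
    with \<open>insert b P \<subseteq> M'\<close> show "b \<in> M" by blast
  qed
  moreover have "q_positive bf M" using M(1) unfolding max_q_positive_def by blast
  moreover have "pi_set bf P \<noteq> {}" using pi_sub[OF P] P unfolding q_positive_def by blast
  ultimately show "q_positive bf (pi_set bf P)"
    unfolding q_positive_def by blast
next
  assume pq: "q_positive bf (pi_set bf P)"
  have PP: "P \<subseteq> pi_set bf P" using pi_sub[OF P] by blast
  have mx: "max_q_positive bf (pi_set bf P)"
    unfolding max_q_positive_def
  proof (intro conjI allI impI)
    fix A' assume "q_positive bf A' \<and> pi_set bf P \<subseteq> A'"
    then have "A' \<subseteq> pi_set bf P" "pi_set bf P \<subseteq> A'" using pi_sub[of bf A' P] PP by auto
    then show "A' = pi_set bf P" by blast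
  qed (rule pq)
  show "premax_q_positive bf P"
    unfolding premax_q_positive_def
  proof (rule ex1I[of _ "pi_set bf P"])
    show "max_q_positive bf (pi_set bf P) \<and> P \<subseteq> pi_set bf P" using mx PP by blast
  next
    fix M assume a: "max_q_positive bf M \<and> P \<subseteq> M"
    then have "M \<subseteq> pi_set bf P" using pi_sub[of bf M P] unfolding max_q_positive_def by blast
    then show "M = pi_set bf P"
      using a pq unfolding max_q_positive_def by blast
  qed
qed

theorem mainTheorem6:
  fixes bf :: "'a::real_vector \<Rightarrow> 'a \<Rightarrow> real" and P :: "'a set"
  assumes "ssd_space bf"
    and "affine P"
    and "q_positive bf P"
  shows "premax_q_positive bf P \<longleftrightarrow> affine (pi_set bf P)"
proof -
  have bl: "bilinear bf" using assms(1) unfolding ssd_space_def by blast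
  have aff: "\<And>x y u v. x \<in> P \<Longrightarrow> y \<in> P \<Longrightarrow> u + v = 1 \<Longrightarrow> u *\<^sub>R x + v *\<^sub>R y \<in> P"
    using assms(2) unfolding affine_def by blast
  have aff3: "x + y - z \<in> P" if "x \<in> P" "y \<in> P" "z \<in> P" for x y z
  proof -
    have "(1/2) *\<^sub>R x + (1/2) *\<^sub>R y \<in> P" using aff that by simp
    then have "2 *\<^sub>R ((1/2) *\<^sub>R x + (1/2) *\<^sub>R y) + (-1) *\<^sub>R z \<in> P" using aff[OF _ that(3), of _ 2 "-1"] by simp
    then show ?thesis by (simp add: scaleR_add_right)
  qed
  obtain p where p: "p \<in> P" using assms(3) unfolding q_positive_def by blast
  have PP: "P \<subseteq> pi_set bf P" using assms(3) unfolding q_positive_def pi_set_def by auto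
  have pos: "\<And>x y. x \<in> P \<Longrightarrow> y \<in> P \<Longrightarrow> qform bf (x - y) \<ge> 0"
    using assms(3) unfolding q_positive_def by blast
  have tr: "b + x - y \<in> pi_set bf P" if "b \<in> pi_set bf P" "x \<in> P" "y \<in> P" for b x y
    unfolding pi_set_def
  proof (intro CollectI ballI)
    fix a assume a: "a \<in> P"
    have "a + y - x \<in> P" using aff3 a that by blast
    then have "qform bf (b - (a + y - x)) \<ge> 0" using that(1) unfolding pi_set_def by blast
    moreover have "b - (a + y - x) = b + x - y - a" by (simp add: algebra_simps)
    ultimately show "qform bf (b + x - y - a) \<ge> 0" by simp
  qed
  have rf: "2 *\<^sub>R x - b \<in> pi_set bf P" if "b \<in> pi_set bf P" "x \<in> P" for b x
    unfolding pi_set_def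
  proof (intro CollectI ballI)
    fix a assume a: "a \<in> P"
    have "x + x - a \<in> P" using aff3 a that by blast
    then have "qform bf (b - (x + x - a)) \<ge> 0" using that(1) unfolding pi_set_def by blast
    moreover have "b - (x + x - a) = - (2 *\<^sub>R x - b - a)" by (simp add: algebra_simps scaleR_2)
    ultimately show "qform bf (2 *\<^sub>R x - b - a) \<ge> 0" using q_neg[OF bl] by metis
  qed
  have sc: "x + t *\<^sub>R (b - x) \<in> pi_set bf P" if "b \<in> pi_set bf P" "x \<in> P" for b x t
    unfolding pi_set_def
  proof (intro CollectI ballI)
    fix a assume a: "a \<in> P"
    show "qform bf (x + t *\<^sub>R (b - x) - a) \<ge> 0"
    proof (cases "t = 0")
      case True then show ?thesis using pos that a by simp
    next
      case False
      have "x + (1/t) *\<^sub>R (a - x) = (1 - 1/t) *\<^sub>R x + (1/t) *\<^sub>R a"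
        by (simp add: algebra_simps)
      also have "\<dots> \<in> P" using aff that a by simp
      finally have m: "x + (1/t) *\<^sub>R (a - x) \<in> P" .
      have "qform bf (b - (x + (1/t) *\<^sub>R (a - x))) \<ge> 0" using m that(1) unfolding pi_set_def by blast
      moreover have "x + t *\<^sub>R (b - x) - a = t *\<^sub>R (b - (x + (1/t) *\<^sub>R (a - x)))"
        using False by (simp add: algebra_simps)
      ultimately show ?thesis using q_scale[OF bl] by simp
    qed
  qed
  have "q_positive bf (pi_set bf P) \<longleftrightarrow> affine (pi_set bf P)"
  proof
    assume pq: "q_positive bf (pi_set bf P)"
    have add: "b + c - p \<in> pi_set bf P" if "b \<in> pi_set bf P" "c \<in> pi_set bf P" for b c
      unfolding pi_set_def
    proof (intro CollectI ballI)
      fix a assume a: "a \<in> P"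
      have "2 *\<^sub>R p - c \<in> pi_set bf P" using rf that p by blast
      then have "2 *\<^sub>R p - c + a - p \<in> pi_set bf P" using tr a p by blast
      then have "qform bf (b - (2 *\<^sub>R p - c + a - p)) \<ge> 0" using pq that unfolding q_positive_def by blast
      moreover have "b - (2 *\<^sub>R p - c + a - p) = b + c - p - a" by (simp add: algebra_simps scaleR_2)
      ultimately show "qform bf (b + c - p - a) \<ge> 0" by simp
    qed
    show "affine (pi_set bf P)"
      unfolding affine_def
    proof (intro ballI allI impI)
      fix b c and u v :: real assume bc: "b \<in> pi_set bf P" "c \<in> pi_set bf P" and uv: "u + v = 1"
      have "(p + u *\<^sub>R (b - p)) + (p + v *\<^sub>R (c - p)) - p \<in> pi_set bf P"
        using add sc bc p by blast
      moreover have "(p + u *\<^sub>R (b - p)) + (p + v *\<^sub>R (c - p)) - p = u *\<^sub>R b + v *\<^sub>R c"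
      proof -
        have e: "u *\<^sub>R p + v *\<^sub>R p = p" using uv by (metis scaleR_add_left scaleR_one)
        have "(p + u *\<^sub>R (b - p)) + (p + v *\<^sub>R (c - p)) - p = u *\<^sub>R b + v *\<^sub>R c + (p - (u *\<^sub>R p + v *\<^sub>R p))"
          by (simp add: algebra_simps)
        then show ?thesis using e by simp
      qed
      ultimately show "u *\<^sub>R b + v *\<^sub>R c \<in> pi_set bf P" by simp
    qed
  next
    assume ap: "affine (pi_set bf P)"
    have aff2: "\<And>x y u v. x \<in> pi_set bf P \<Longrightarrow> y \<in> pi_set bf P \<Longrightarrow> u + v = 1 \<Longrightarrow> u *\<^sub>R x + v *\<^sub>R y \<in> pi_set bf P"
      using ap unfolding affine_def by blast
    show "q_positive bf (pi_set bf P)"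
      unfolding q_positive_def
    proof (intro conjI ballI)
      show "pi_set bf P \<noteq> {}" using PP p by blast
    next
      fix b c assume bc: "b \<in> pi_set bf P" "c \<in> pi_set bf P"
      have "(1/2) *\<^sub>R b + (1/2) *\<^sub>R p \<in> pi_set bf P" using aff2 bc PP p by auto
      then have "2 *\<^sub>R ((1/2) *\<^sub>R b + (1/2) *\<^sub>R p) + (-1) *\<^sub>R c \<in> pi_set bf P" using aff2[OF _ bc(2), of _ 2 "-1"] by simp
      then have "b - c + p \<in> pi_set bf P" by (simp add: scaleR_add_right algebra_simps)
      then have "qform bf (b - c + p - p) \<ge> 0" using p unfolding pi_set_def by blast
      then show "qform bf (b - c) \<ge> 0" by simp
    qed
  qed
  then show ?thesis using premax_iff[OF bl assms(3)] by simp
qed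

end
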